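(* Let $L\subseteq\Sigma^*$ be a regular language with $\kappa(L)=n$. If $n=1$ (and $L$ is closed), then $\kappa(L^R)=1$. If $n\ge 2$: 1. if $L$ is prefix-closed, $\kappa(L^R)\le 2^{n-1}$, and this is tight over alphabets with $|\Sigma|\ge 2$; 2. if $L$ is suffix-closed, $\kappa(L^R)\le 2^{n-1}+1$, and this is tight over alphabets with $|\Sigma|\ge 3$; 3. if $L$ is factor-closed, $\kappa(L^R)\le 2^{n-2}+1$, and this is tight over alphabets with $|\Sigma|\ge 3$; 4. if $L$ is subword-closed, $\kappa(L^R)\le 2^{n-2}+1$, and this is tight over alphabets with $|\Sigma|\ge 2n$. Here "tight" means that for every $n\ge 2$ there is a language of the given class over such an alphabet with $\kappa(L)=n$ attaining the bound.
   Context: $\Sigma$ is a finite non-empty alphabet. $L_w=\{x\mid wx\in L\}$ is the left quotient of $L$ by $w$, and $\kappa(L)$ is the number of distinct quotients of $L$ (its state complexity). $L^R=\{w^R\mid w\in L\}$, where $w^R$ is the reversal of $w$. A language is prefix-closed (suffix-, factor-, subword-closed) if it contains every prefix (suffix, factor, subword) of each of its words, where subword means scattered subsequence. *)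

theory Defs
  imports Main "HOL-Library.Sublist" "HOL-Library.Cardinality"
begin

text \<open>Languages over a finite non-empty alphabet, given by a type of class finite
  (types are non-empty).\<close>

definition lquot :: "'a list set \<Rightarrow> 'a list \<Rightarrow> 'a list set" where
  "lquot L w = {x. w @ x \<in> L}"

text \<open>State complexity: number of distinct left quotients.\<close>
definition kappa :: "'a list set \<Rightarrow> nat" where
  "kappa L = card {lquot L w | w. True}"

definition lrev :: "'a list set \<Rightarrow> 'a list set" where
  "lrev L = rev ` L"

definition regular_lang :: "('a::finite) list set \<Rightarrow> bool" where
  "regular_lang L \<longleftrightarrow> (\<exists>(Q::nat set) (\<delta>::nat \<Rightarrow> 'a \<Rightarrow> nat) q0 F.
      finite Q \<and> q0 \<in> Q \<and> (\<forall>q\<in>Q. \<forall>a. \<delta> q a \<in> Q) \<and> F \<subseteq> Q \<and>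
      L = {w. foldl \<delta> q0 w \<in> F})"

definition prefix_closed :: "'a list set \<Rightarrow> bool" where
  "prefix_closed L \<longleftrightarrow> (\<forall>w\<in>L. \<forall>v. prefix v w \<longrightarrow> v \<in> L)"

definition suffix_closed :: "'a list set \<Rightarrow> bool" where
  "suffix_closed L \<longleftrightarrow> (\<forall>w\<in>L. \<forall>v. suffix v w \<longrightarrow> v \<in> L)"

definition factor_closed :: "'a list set \<Rightarrow> bool" where
  "factor_closed L \<longleftrightarrow> (\<forall>w\<in>L. \<forall>v. sublist v w \<longrightarrow> v \<in> L)"

definition subword_closed :: "'a list set \<Rightarrow> bool" where
  "subword_closed L \<longleftrightarrow> (\<forall>w\<in>L. \<forall>v. subseq v w \<longrightarrow> v \<in> L)"

end

theory Submission
  imports Defs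
begin


definition Quots :: "'a list set \<Rightarrow> 'a list set set" where
  "Quots L = {lquot L w | w. True}"

definition Sset :: "'a list set \<Rightarrow> 'a list \<Rightarrow> 'a list set set" where
  "Sset L u = {K \<in> Quots L. u \<in> K}"

lemma kappa_Quots: "kappa L = card (Quots L)"
  by (simp add: kappa_def Quots_def)

lemma foldl_Q: "q \<in> Q \<Longrightarrow> \<forall>q\<in>Q. \<forall>a. \<delta> q a \<in> Q \<Longrightarrow> foldl \<delta> q w \<in> Q"
  by (induction w arbitrary: q) auto

lemma regular_finite_Quots:
  assumes "regular_lang L" shows "finite (Quots L)"
proof -
  obtain Q \<delta> q0 F where h: "finite (Q::nat set)" "q0 \<in> Q" "\<forall>q\<in>Q. \<forall>a. \<delta> q a \<in> Q" "F \<subseteq> Q"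
    "L = {w. foldl \<delta> q0 w \<in> F}" using assms unfolding regular_lang_def by (elim exE conjE) blast
  have "Quots L \<subseteq> (\<lambda>q. {x. foldl \<delta> q x \<in> F}) ` Q"
  proof
    fix K assume "K \<in> Quots L"
    then obtain w where "K = lquot L w" by (auto simp: Quots_def)
    hence "K = {x. foldl \<delta> (foldl \<delta> q0 w) x \<in> F}" using h(5) by (simp add: lquot_def)
    moreover have "foldl \<delta> q0 w \<in> Q" by (rule foldl_Q[OF h(2) h(3)])
    ultimately show "K \<in> (\<lambda>q. {x. foldl \<delta> q x \<in> F}) ` Q" by blast
  qed
  thus ?thesis by (rule finite_surj[OF h(1)])
qed

lemma rev_image_iff: "y \<in> rev ` L \<longleftrightarrow> rev y \<in> L"
  by (metis image_iff rev_rev_ident)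

lemma lquot_lquot: "lquot L w \<in> Quots L" by (auto simp: Quots_def)

lemma lquot_lrev: "lquot (lrev L) w = {x. lquot L (rev x) \<in> Sset L (rev w)}"
  using lquot_lquot[of L, unfolded lquot_def] by (auto simp: lquot_def lrev_def rev_image_iff Sset_def)

lemma kappa_rev_le:
  assumes "range (Sset L) \<subseteq> A" "finite A"
  shows "kappa (lrev L) \<le> card A"
proof -
  let ?G = "\<lambda>S. {x. lquot L (rev x) \<in> S}"
  have "Quots (lrev L) \<subseteq> ?G ` A"
    using assms(1) by (auto simp: Quots_def lquot_lrev)
  hence "card (Quots (lrev L)) \<le> card (?G ` A)"
    using assms(2) by (simp add: card_mono)
  also have "\<dots> \<le> card A" using assms(2) card_image_le by blast
  finally show ?thesis by (simp add: kappa_Quots)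
qed

lemma L_in_Quots: "L \<in> Quots L"
proof -
  have "lquot L [] = L" by (simp add: lquot_def)
  thus ?thesis by (metis lquot_lquot)
qed

lemma empty_Quots_prefix:
  assumes "prefix_closed L" "kappa L \<ge> 2" "regular_lang L" shows "{} \<in> Quots L"
proof (rule ccontr)
  assume a: "{} \<notin> Quots L"
  have "\<forall>w. w \<in> L"
  proof
    fix w
    have "lquot L w \<noteq> {}" using a lquot_lquot by metis
    then obtain x where x: "w @ x \<in> L" by (auto simp: lquot_def)
    have "prefix w (w @ x)" by simp
    thus "w \<in> L" using assms(1) x unfolding prefix_closed_def by blast
  qed
  hence "Quots L = {UNIV}" by (auto simp: Quots_def lquot_def)
  thus False using assms(2) by (simp add: kappa_Quots)
qed

lemma suffix_quot_sub: "suffix_closed L \<Longrightarrow> lquot L w \<subseteq> L"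
  unfolding suffix_closed_def lquot_def by (auto simp: suffix_def)

lemma Quots_sub_suffix: "suffix_closed L \<Longrightarrow> K \<in> Quots L \<Longrightarrow> K \<subseteq> L"
  by (auto simp: Quots_def dest: suffix_quot_sub)

lemma factor_prefix: "factor_closed L \<Longrightarrow> prefix_closed L"
  unfolding factor_closed_def prefix_closed_def by (auto intro: prefix_imp_sublist)

lemma factor_suffix: "factor_closed L \<Longrightarrow> suffix_closed L"
  unfolding factor_closed_def suffix_closed_def by (auto intro: suffix_imp_sublist)

lemma subword_factor: "subword_closed L \<Longrightarrow> factor_closed L"
  unfolding factor_closed_def subword_closed_def by (auto intro: sublist_imp_subseq)

lemma prefix_suffix_factor: "prefix_closed L \<Longrightarrow> suffix_closed L \<Longrightarrow> factor_closed L"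
  unfolding factor_closed_def prefix_closed_def suffix_closed_def sublist_def
  by (metis prefixI suffixI)



lemma dfa_kappa:
  fixes \<delta> :: "nat \<Rightarrow> 'a::finite \<Rightarrow> nat"
  assumes fin: "finite Q" and q0: "q0 \<in> Q" and cl: "\<forall>q\<in>Q. \<forall>a. \<delta> q a \<in> Q" and FQ: "F \<subseteq> Q"
  and reach: "\<forall>q\<in>Q. \<exists>w. foldl \<delta> q0 w = q"
  and dist: "\<forall>p\<in>Q. \<forall>q\<in>Q. p \<noteq> q \<longrightarrow> (\<exists>w. (foldl \<delta> p w \<in> F) \<noteq> (foldl \<delta> q w \<in> F))"
  and L: "L = {w. foldl \<delta> q0 w \<in> F}"
  shows "regular_lang L \<and> kappa L = card Q \<and>
     kappa (lrev L) = card (range (\<lambda>u. {q\<in>Q. foldl \<delta> q u \<in> F}))"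
proof -
  have reg: "regular_lang L" unfolding regular_lang_def using fin q0 cl FQ L by blast
  let ?lg = "\<lambda>q. {x. foldl \<delta> q x \<in> F}"
  have fQ: "\<And>w. foldl \<delta> q0 w \<in> Q" by (rule foldl_Q[OF q0 cl])
  have lq: "\<And>w. lquot L w = ?lg (foldl \<delta> q0 w)" using L by (simp add: lquot_def)
  have QE: "Quots L = ?lg ` Q"
  proof
    show "Quots L \<subseteq> ?lg ` Q" using lq fQ by (auto simp: Quots_def)
    show "?lg ` Q \<subseteq> Quots L"
    proof
      fix K assume "K \<in> ?lg ` Q"
      then obtain q where q: "q \<in> Q" "K = ?lg q" by blast
      then obtain w where "foldl \<delta> q0 w = q" using reach by blast
      thus "K \<in> Quots L" using q lq[of w] lquot_lquot by metis
    qed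
  qed
  have inj: "inj_on ?lg Q"
  proof (rule inj_onI)
    fix p q assume "p \<in> Q" "q \<in> Q" "?lg p = ?lg q"
    thus "p = q" using dist by blast
  qed
  have k1: "kappa L = card Q" using QE inj by (simp add: kappa_Quots card_image)
  let ?T = "\<lambda>u. {q\<in>Q. foldl \<delta> q u \<in> F}"
  let ?G = "\<lambda>S. {x. foldl \<delta> q0 (rev x) \<in> S}"
  have lr: "\<And>w. lquot (lrev L) w = ?G (?T (rev w))"
    using L fQ by (auto simp: lquot_def lrev_def rev_image_iff)
  have QR: "Quots (lrev L) = ?G ` range ?T"
  proof
    show "Quots (lrev L) \<subseteq> ?G ` range ?T"
    proof
      fix K assume "K \<in> Quots (lrev L)"
      then obtain w where "K = lquot (lrev L) w" by (auto simp: Quots_def)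
      hence "K = ?G (?T (rev w))" using lr by simp
      thus "K \<in> ?G ` range ?T" by blast
    qed
    show "?G ` range ?T \<subseteq> Quots (lrev L)"
    proof
      fix K assume "K \<in> ?G ` range ?T"
      then obtain u where "K = ?G (?T u)" by blast
      hence "K = lquot (lrev L) (rev u)" using lr[of "rev u"] by simp
      thus "K \<in> Quots (lrev L)" using lquot_lquot by metis
    qed
  qed
  have inj2: "inj_on ?G (range ?T)"
  proof (rule inj_onI)
    fix S S' assume S: "S \<in> range ?T" "S' \<in> range ?T" "?G S = ?G S'"
    have "S \<subseteq> Q" "S' \<subseteq> Q" using S(1,2) by auto
    have "\<And>q. q \<in> Q \<Longrightarrow> q \<in> S \<longleftrightarrow> q \<in> S'"
    proof -
      fix q assume "q \<in> Q"
      then obtain w where w: "foldl \<delta> q0 w = q" using reach by blast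
      have "rev w \<in> ?G S \<longleftrightarrow> rev w \<in> ?G S'" using S(3) by simp
      thus "q \<in> S \<longleftrightarrow> q \<in> S'" using w by simp
    qed
    thus "S = S'" using \<open>S \<subseteq> Q\<close> \<open>S' \<subseteq> Q\<close> by blast
  qed
  have "kappa (lrev L) = card (range ?T)" using QR inj2 by (simp add: kappa_Quots card_image)
  thus ?thesis using reg k1 by blast
qed

lemma range_T_finite: "finite Q \<Longrightarrow> finite (range (\<lambda>u. {q\<in>Q. P q u}))"
  by (rule finite_subset[of _ "Pow Q"]) auto

lemma sim_lang:
  assumes step: "\<And>p p' x. R p p' \<Longrightarrow> R (\<delta> p x) (\<delta> p' x)"
  and acc: "\<And>p p'. R p p' \<Longrightarrow> p \<in> F \<Longrightarrow> p' \<in> F"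
  shows "R p p' \<Longrightarrow> foldl \<delta> p w \<in> F \<Longrightarrow> foldl \<delta> p' w \<in> F"
proof (induction w arbitrary: p p')
  case Nil thus ?case using acc by simp
next
  case (Cons x w)
  have "R (\<delta> p x) (\<delta> p' x)" using step Cons.prems(1) .
  thus ?case using Cons.IH Cons.prems(2) by simp
qed

lemma sim_subseq:
  assumes step: "\<And>p p' x. R p p' \<Longrightarrow> R (\<delta> p x) (\<delta> p' x)"
  and acc: "\<And>p p'. R p p' \<Longrightarrow> p \<in> F \<Longrightarrow> p' \<in> F"
  and dec: "\<And>q x. R (\<delta> q x) q"
  shows "subseq v w \<Longrightarrow> foldl \<delta> q w \<in> F \<Longrightarrow> foldl \<delta> q v \<in> F"
proof (induction v w arbitrary: q rule: list_emb.induct)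
  case (list_emb_Nil ys)
  have "\<And>q. foldl \<delta> q ys \<in> F \<Longrightarrow> q \<in> F"
  proof (induction ys)
    case (Cons y ys) thus ?case using acc dec by (metis foldl_Cons)
  qed simp
  thus ?case using list_emb_Nil by simp
next
  case (list_emb_Cons xs ys y)
  have "foldl \<delta> q ys \<in> F" using sim_lang[where R=R and \<delta>=\<delta> and F=F and p="\<delta> q y" and p'=q and w=ys, OF step acc] dec list_emb_Cons.prems by simp
  thus ?case using list_emb_Cons.IH by simp
next
  case (list_emb_Cons2 x y xs ys)
  thus ?case by simp
qed

lemma rot_pow:
  assumes "\<And>q. 1 \<le> q \<Longrightarrow> q \<le> m \<Longrightarrow> \<delta> q a = Suc (q mod m)"
  shows "1 \<le> q \<Longrightarrow> q \<le> m \<Longrightarrow> foldl \<delta> q (replicate k a) = Suc ((q - 1 + k) mod m)"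
proof (induction k arbitrary: q)
  case 0 thus ?case by simp
next
  case (Suc k)
  have m: "m > 0" using Suc.prems by simp
  have d: "\<delta> q a = Suc (q mod m)" using assms Suc.prems by simp
  have r: "1 \<le> Suc (q mod m)" "Suc (q mod m) \<le> m" using m by (auto simp: Suc_leI)
  have "foldl \<delta> q (replicate (Suc k) a) = foldl \<delta> (Suc (q mod m)) (replicate k a)" using d by simp
  also have "\<dots> = Suc ((q mod m + k) mod m)" using Suc.IH[OF r] by simp
  also have "\<dots> = Suc ((q - 1 + Suc k) mod m)" using Suc.prems by (simp add: mod_add_left_eq)
  finally show ?case .
qed



definition hitw :: "nat \<Rightarrow> 'a \<Rightarrow> 'a \<Rightarrow> nat \<Rightarrow> 'a list" where
  "hitw m a b r = replicate ((m + 1 - r) mod m) a @ [b] @ replicate (m - (m + 1 - r) mod m) a"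

lemma hit_key:
  fixes r m q :: nat
  assumes "1 \<le> r" "r \<le> m" "1 \<le> q" "q \<le> m"
  shows "(q - 1 + (m + 1 - r) mod m) mod m = 0 \<longleftrightarrow> q = r"
proof (cases "r = 1")
  case True
  hence "(m + 1 - r) mod m = 0" by (metis add_diff_cancel_right' mod_self)
  thus ?thesis using assms True by auto
next
  case False
  hence j: "(m + 1 - r) mod m = m + 1 - r" using assms by simp
  show ?thesis
  proof (cases "q \<ge> r")
    case True
    hence eq: "q - 1 + (m + 1 - r) = (q - r) + m" using assms by simp
    have "(q - 1 + (m + 1 - r)) mod m = ((q - r) + m) mod m" by (simp only: eq)
    also have "\<dots> = (q - r) mod m" by (rule mod_add_self2)
    also have "\<dots> = q - r" using assms by (intro mod_less) arith
    finally have "(q - 1 + (m + 1 - r)) mod m = q - r" .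
    thus ?thesis using j True by auto
  next
    case f2: False
    hence "q - 1 + (m + 1 - r) < m" "q - 1 + (m + 1 - r) > 0" using assms False by auto
    thus ?thesis using j f2 by auto
  qed
qed

lemma rot_hit:
  assumes rot: "\<And>q. 1 \<le> q \<Longrightarrow> q \<le> m \<Longrightarrow> \<delta> q a = Suc (q mod m)"
  and b1: "\<delta> 1 b = s" and bq: "\<And>q. 2 \<le> q \<Longrightarrow> q \<le> m \<Longrightarrow> \<delta> q b = q"
  and sfix: "\<And>k. foldl \<delta> s (replicate k a) = s"
  and r: "1 \<le> r" "r \<le> m" and q: "1 \<le> q" "q \<le> m"
  shows "foldl \<delta> q (hitw m a b r) = (if q = r then s else q)"
proof -
  define j where "j = (m + 1 - r) mod m"
  have m: "m > 0" using r by simp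
  have jm: "j < m" using m by (simp add: j_def)
  define q1 where "q1 = Suc ((q - 1 + j) mod m)"
  have f1: "foldl \<delta> q (replicate j a) = q1" using rot_pow[where m=m and \<delta>=\<delta> and a=a, OF rot q] by (simp add: q1_def)
  have key: "q1 = 1 \<longleftrightarrow> q = r" using hit_key[OF r q] by (simp add: q1_def j_def)
  have q1r: "1 \<le> q1" "q1 \<le> m" using m by (auto simp: q1_def Suc_leI)
  have "foldl \<delta> q (hitw m a b r) = foldl \<delta> (\<delta> q1 b) (replicate (m - j) a)"
    unfolding hitw_def j_def[symmetric] using f1 by simp
  also have "\<dots> = (if q = r then s else q)"
  proof (cases "q = r")
    case True
    thus ?thesis using key b1 sfix by simp
  next
    case False
    hence "q1 \<ge> 2" using key q1r by simp
    hence "\<delta> q1 b = q1" using bq q1r by simp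
    moreover have "foldl \<delta> q1 (replicate (m - j) a) = q"
    proof -
      have "foldl \<delta> q1 (replicate (m - j) a) = Suc ((q1 - 1 + (m - j)) mod m)"
        using rot_pow[where m=m and \<delta>=\<delta> and a=a, OF rot q1r] by simp
      also have "(q1 - 1 + (m - j)) mod m = (q - 1 + j + (m - j)) mod m"
        by (simp add: q1_def mod_add_left_eq)
      also have "q - 1 + j + (m - j) = (q - 1) + m" using jm by simp
      also have "((q - 1) + m) mod m = (q - 1) mod m" by (rule mod_add_self2)
      also have "(q - 1) mod m = q - 1" using q by simp
      finally show ?thesis using q by simp
    qed
    ultimately show ?thesis using False by simp
  qed
  finally show ?thesis .
qed



lemma Quots_const: "(\<And>w. lquot L w = L) \<Longrightarrow> Quots L = {L}"
  by (auto simp: Quots_def)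

lemma kappa1:
  assumes "regular_lang L" "kappa L = 1" shows "kappa (lrev L) = 1"
proof -
  have fin: "finite (Quots L)" using regular_finite_Quots assms(1) .
  have "card (Quots L) = 1" using assms(2) kappa_Quots by metis
  then obtain K where K: "Quots L = {K}" using card_1_singletonE by blast
  hence all: "\<And>w. lquot L w = L" using L_in_Quots lquot_lquot by (metis singletonD)
  have "\<And>w. w \<in> L \<longleftrightarrow> [] \<in> L"
  proof -
    fix w have "[] \<in> lquot L w \<longleftrightarrow> w \<in> L" by (simp add: lquot_def)
    thus "w \<in> L \<longleftrightarrow> [] \<in> L" using all by simp
  qed
  hence "L = {} \<or> L = UNIV" by blast
  moreover have "lrev {} = {}" "lrev UNIV = UNIV" by (auto simp: lrev_def rev_image_iff)
  ultimately have "lrev L = L" by auto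
  thus ?thesis using assms(2) by simp
qed

lemma ub_prefix:
  assumes "regular_lang L" "kappa L = n" "n \<ge> 2" "prefix_closed L"
  shows "kappa (lrev L) \<le> 2 ^ (n - 1)"
proof -
  have fin: "finite (Quots L)" using regular_finite_Quots assms(1) .
  have e: "{} \<in> Quots L" by (rule empty_Quots_prefix) (use assms in auto)
  have "range (Sset L) \<subseteq> Pow (Quots L - {{}})" by (auto simp: Sset_def)
  hence "kappa (lrev L) \<le> card (Pow (Quots L - {{}}))" by (rule kappa_rev_le) (use fin in simp)
  also have "\<dots> = 2 ^ (n - 1)" using fin e assms(2) by (simp add: card_Pow kappa_Quots)
  finally show ?thesis .
qed

lemma ub_suffix:
  assumes "regular_lang L" "kappa L = n" "n \<ge> 2" "suffix_closed L"
  shows "kappa (lrev L) \<le> 2 ^ (n - 1) + 1"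
proof -
  have fin: "finite (Quots L)" using regular_finite_Quots assms(1) .
  have e: "L \<in> Quots L" using L_in_Quots .
  let ?A = "insert {} (insert L ` Pow (Quots L - {L}))"
  have "range (Sset L) \<subseteq> ?A"
  proof
    fix S assume "S \<in> range (Sset L)"
    then obtain u where S: "S = Sset L u" by blast
    show "S \<in> ?A"
    proof (cases "u \<in> L")
      case True
      hence "S = insert L (S - {L})" using S e by (auto simp: Sset_def)
      moreover have "S - {L} \<in> Pow (Quots L - {L})" using S by (auto simp: Sset_def)
      ultimately show ?thesis by blast
    next
      case False
      hence "S = {}" using S Quots_sub_suffix[OF assms(4)] by (auto simp: Sset_def)
      thus ?thesis by simp
    qed
  qed
  hence "kappa (lrev L) \<le> card ?A" by (rule kappa_rev_le) (use fin in simp)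
  also have "\<dots> \<le> card (insert L ` Pow (Quots L - {L})) + 1"
    by (simp add: card_insert_le_m1 card_insert_if)
  also have "\<dots> \<le> card (Pow (Quots L - {L})) + 1"
    by (simp add: card_image_le fin)
  also have "\<dots> = 2 ^ (n - 1) + 1" using fin e assms(2) by (simp add: card_Pow kappa_Quots)
  finally show ?thesis .
qed

lemma ub_factor:
  assumes "regular_lang L" "kappa L = n" "n \<ge> 2" "factor_closed L"
  shows "kappa (lrev L) \<le> 2 ^ (n - 2) + 1"
proof -
  have fin: "finite (Quots L)" using regular_finite_Quots assms(1) .
  have e: "L \<in> Quots L" using L_in_Quots .
  have e0: "{} \<in> Quots L" by (rule empty_Quots_prefix) (use assms factor_prefix in auto)
  have ne: "L \<noteq> {}"
  proof
    assume "L = {}"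
    hence "Quots L = {{}}" by (auto simp: Quots_def lquot_def)
    thus False using assms(2,3) by (simp add: kappa_Quots)
  qed
  let ?A = "insert {} (insert L ` Pow (Quots L - {L, {}}))"
  have "range (Sset L) \<subseteq> ?A"
  proof
    fix S assume "S \<in> range (Sset L)"
    then obtain u where S: "S = Sset L u" by blast
    show "S \<in> ?A"
    proof (cases "u \<in> L")
      case True
      hence "S = insert L (S - {L})" using S e by (auto simp: Sset_def)
      moreover have "S - {L} \<in> Pow (Quots L - {L, {}})" using S by (auto simp: Sset_def)
      ultimately show ?thesis by blast
    next
      case False
      hence "S = {}" using S Quots_sub_suffix[OF factor_suffix[OF assms(4)]] by (auto simp: Sset_def)
      thus ?thesis by simp
    qed
  qed
  hence "kappa (lrev L) \<le> card ?A" by (rule kappa_rev_le) (use fin in simp)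
  also have "\<dots> \<le> card (insert L ` Pow (Quots L - {L, {}})) + 1"
    by (simp add: card_insert_le_m1 card_insert_if)
  also have "\<dots> \<le> card (Pow (Quots L - {L, {}})) + 1"
    by (simp add: card_image_le fin)
  also have "\<dots> = 2 ^ (n - 2) + 1"
  proof -
    have "card (Quots L - {L, {}}) = n - 2"
      using fin e e0 ne assms(2) by (simp add: kappa_Quots card_Diff_subset)
    thus ?thesis using fin by (simp add: card_Pow)
  qed
  finally show ?thesis .
qed



lemma foldl_sink: "(\<And>x. \<delta> s x = s) \<Longrightarrow> foldl \<delta> s w = s"
  by (induction w) auto

lemma wit_prefix:
  fixes a b :: "'a::finite"
  assumes ab: "a \<noteq> b" and m: "m \<ge> 1"
  shows "\<exists>L :: 'a list set. regular_lang L \<and> prefix_closed L \<and> kappa L = m + 1 \<and> kappa (lrev L) \<ge> 2 ^ m"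
proof -
  define \<delta> :: "nat \<Rightarrow> 'a \<Rightarrow> nat" where
    "\<delta> q x = (if 1 \<le> q \<and> q \<le> m then (if x = a then Suc (q mod m) else if q = 1 then 0 else q) else 0)" for q x
  define Q where "Q = {..m}"
  define F where "F = {1..m}"
  define L where "L = {w. foldl \<delta> 1 w \<in> F}"
  have rot: "\<And>q. 1 \<le> q \<Longrightarrow> q \<le> m \<Longrightarrow> \<delta> q a = Suc (q mod m)" by (simp add: \<delta>_def)
  have b1: "\<delta> 1 b = 0" using ab m by (simp add: \<delta>_def)
  have bq: "\<And>q. 2 \<le> q \<Longrightarrow> q \<le> m \<Longrightarrow> \<delta> q b = q" using ab by (simp add: \<delta>_def)
  have s0: "\<And>w. foldl \<delta> 0 w = 0" by (rule foldl_sink) (simp add: \<delta>_def)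
  have hit: "\<And>r q. 1 \<le> r \<Longrightarrow> r \<le> m \<Longrightarrow> 1 \<le> q \<Longrightarrow> q \<le> m \<Longrightarrow>
      foldl \<delta> q (hitw m a b r) = (if q = r then 0 else q)"
    using rot_hit[where m=m and \<delta>=\<delta> and a=a and b=b, OF rot b1 bq] s0 by blast
  have cl: "\<forall>q\<in>Q. \<forall>x. \<delta> q x \<in> Q"
    using m by (auto simp: \<delta>_def Q_def Suc_leI)
  have reach: "\<forall>q\<in>Q. \<exists>w. foldl \<delta> 1 w = q"
  proof
    fix q assume q: "q \<in> Q"
    show "\<exists>w. foldl \<delta> 1 w = q"
    proof (cases "q = 0")
      case True thus ?thesis using b1 by (intro exI[of _ "[b]"]) simp
    next
      case False
      hence "foldl \<delta> 1 (replicate (q - 1) a) = q" using rot_pow[where m=m and \<delta>=\<delta> and a=a and q=1 and k="q - 1", OF rot] q m by (simp add: Q_def)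
      thus ?thesis by blast
    qed
  qed
  have dist: "\<forall>p\<in>Q. \<forall>q\<in>Q. p \<noteq> q \<longrightarrow> (\<exists>w. (foldl \<delta> p w \<in> F) \<noteq> (foldl \<delta> q w \<in> F))"
  proof (intro ballI impI)
    fix p q assume pq: "p \<in> Q" "q \<in> Q" "p \<noteq> q"
    show "\<exists>w. (foldl \<delta> p w \<in> F) \<noteq> (foldl \<delta> q w \<in> F)"
    proof (cases "p = 0 \<or> q = 0")
      case True
      thus ?thesis using pq by (intro exI[of _ "[]"]) (auto simp: F_def Q_def)
    next
      case False
      hence "foldl \<delta> p (hitw m a b p) = 0" "foldl \<delta> q (hitw m a b p) = q"
        using hit pq by (auto simp: Q_def)
      thus ?thesis using False pq by (intro exI[of _ "hitw m a b p"]) (auto simp: F_def Q_def)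
    qed
  qed
  have dk: "regular_lang L \<and> kappa L = card Q \<and>
     kappa (lrev L) = card (range (\<lambda>u. {q\<in>Q. foldl \<delta> q u \<in> F}))"
    by (rule dfa_kappa) (use cl reach dist m in \<open>auto simp: Q_def F_def L_def\<close>)
  have pc: "prefix_closed L"
    unfolding prefix_closed_def
  proof (intro ballI allI impI)
    fix w v assume w: "w \<in> L" and "prefix v w"
    then obtain s where s: "w = v @ s" by (auto simp: prefix_def)
    have "foldl \<delta> 1 v \<in> Q" using foldl_Q[OF _ cl] m by (simp add: Q_def)
    moreover have "foldl \<delta> (foldl \<delta> 1 v) s \<in> F" using w s by (simp add: L_def)
    ultimately show "v \<in> L" using s0 by (cases "foldl \<delta> 1 v = 0") (auto simp: L_def F_def Q_def)
  qed
  let ?T = "\<lambda>u. {q\<in>Q. foldl \<delta> q u \<in> F}"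
  have fT: "finite (range ?T)" by (rule range_T_finite) (simp add: Q_def)
  have Tsub: "\<And>u. ?T u \<subseteq> {1..m}"
  proof
    fix u q assume "q \<in> ?T u"
    thus "q \<in> {1..m}" using s0[of u] by (cases "q = 0") (auto simp: Q_def F_def)
  qed
  have step: "\<And>u r. 1 \<le> r \<Longrightarrow> r \<le> m \<Longrightarrow> ?T (hitw m a b r @ u) = ?T u - {r}"
  proof -
    fix u r assume r: "1 \<le> r" "r \<le> m"
    show "?T (hitw m a b r @ u) = ?T u - {r}"
    proof (rule set_eqI)
      fix q
      show "q \<in> ?T (hitw m a b r @ u) \<longleftrightarrow> q \<in> ?T u - {r}"
      proof (cases "q = 0")
        case True thus ?thesis using s0 by (simp add: F_def)
      next
        case False
        thus ?thesis using hit[OF r, of q] s0 by (cases "q = r") (auto simp: Q_def F_def)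
      qed
    qed
  qed
  have gen: "\<And>R. finite R \<Longrightarrow> R \<subseteq> {1..m} \<Longrightarrow> \<exists>u. ?T u = {1..m} - R"
  proof -
    fix R :: "nat set" assume "finite R" "R \<subseteq> {1..m}"
    thus "\<exists>u. ?T u = {1..m} - R"
    proof (induction R rule: finite_induct)
      case empty
      have "?T [] = {1..m}" by (auto simp: Q_def F_def)
      thus ?case by (intro exI[of _ "[]"]) simp
    next
      case (insert r R)
      then obtain u where u: "?T u = {1..m} - R" by auto
      have "?T (hitw m a b r @ u) = {1..m} - insert r R" using step[where u=u and r=r] u insert.prems by auto
      thus ?case by blast
    qed
  qed
  have "Pow {1..m} \<subseteq> range ?T"
  proof
    fix S assume "S \<in> Pow {1..m}"
    hence "S = {1..m} - ({1..m} - S)" by auto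
    have "finite ({1..m} - S)" "{1..m} - S \<subseteq> {1..m}" by auto
    then obtain u where "?T u = {1..m} - ({1..m} - S)" using gen by blast
    hence "S = ?T u" using \<open>S = {1..m} - ({1..m} - S)\<close> by simp
    thus "S \<in> range ?T" by (rule image_eqI[OF _ UNIV_I])
  qed
  hence "card (Pow {1..m}) \<le> card (range ?T)"
    by (rule card_mono[OF fT])
  hence "kappa (lrev L) \<ge> 2 ^ m" using dk by (simp add: card_Pow)
  moreover have "kappa L = m + 1" using dk by (simp add: Q_def)
  ultimately show ?thesis using dk pc by blast
qed



lemma card_insert0_Pow:
  "card (insert {} (insert (0::nat) ` Pow {1..m})) = 2 ^ m + 1"
proof -
  have inj: "inj_on (insert (0::nat)) (Pow {1..m})"
  proof (rule inj_onI)
    fix A B assume AB: "A \<in> Pow {1..m}" "B \<in> Pow {1..m}" "insert (0::nat) A = insert 0 B"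
    hence "insert 0 A - {0} = insert 0 B - {0}" by simp
    moreover have "0 \<notin> A" "0 \<notin> B" using AB(1,2) by auto
    ultimately show "A = B" by simp
  qed
  have "{} \<notin> insert (0::nat) ` Pow {1..m}" by auto
  hence "card (insert {} (insert (0::nat) ` Pow {1..m})) = card (insert (0::nat) ` Pow {1..m}) + 1"
    by simp
  also have "\<dots> = 2 ^ m + 1" using inj by (simp add: card_image card_Pow)
  finally show ?thesis .
qed

lemma wit_suffix:
  fixes a b c :: "'a::finite"
  assumes ab: "a \<noteq> b" "a \<noteq> c" "b \<noteq> c" and m: "m \<ge> 1"
  shows "\<exists>L :: 'a list set. regular_lang L \<and> suffix_closed L \<and> kappa L = m + 1 \<and> kappa (lrev L) \<ge> 2 ^ m + 1"
proof -
  define \<delta> :: "nat \<Rightarrow> 'a \<Rightarrow> nat" where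
    "\<delta> q x = (if x = a then (if 1 \<le> q \<and> q \<le> m then Suc (q mod m) else 0)
              else if x = b then (if q = 1 then 0 else q) else 1)" for q x
  define Q where "Q = {..m}"
  define F where "F = {0::nat}"
  define L where "L = {w. foldl \<delta> 0 w \<in> F}"
  have rot: "\<And>q. 1 \<le> q \<Longrightarrow> q \<le> m \<Longrightarrow> \<delta> q a = Suc (q mod m)" by (simp add: \<delta>_def)
  have b1: "\<delta> 1 b = 0" using ab m by (simp add: \<delta>_def)
  have bq: "\<And>q. 2 \<le> q \<Longrightarrow> q \<le> m \<Longrightarrow> \<delta> q b = q" using ab by (simp add: \<delta>_def)
  have s0: "\<And>k. foldl \<delta> 0 (replicate k a) = 0"
  proof -
    fix k show "foldl \<delta> 0 (replicate k a) = 0" by (induction k) (simp_all add: \<delta>_def)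
  qed
  have hit: "\<And>r q. 1 \<le> r \<Longrightarrow> r \<le> m \<Longrightarrow> 1 \<le> q \<Longrightarrow> q \<le> m \<Longrightarrow>
      foldl \<delta> q (hitw m a b r) = (if q = r then 0 else q)"
    using rot_hit[where m=m and \<delta>=\<delta> and a=a and b=b, OF rot b1 bq] s0 by blast
  have hit0: "\<And>r. foldl \<delta> 0 (hitw m a b r) = 0"
    using s0 ab by (simp add: hitw_def \<delta>_def)
  have cl: "\<forall>q\<in>Q. \<forall>x. \<delta> q x \<in> Q"
    using m by (auto simp: \<delta>_def Q_def Suc_leI)
  have reach: "\<forall>q\<in>Q. \<exists>w. foldl \<delta> 0 w = q"
  proof
    fix q assume q: "q \<in> Q"
    show "\<exists>w. foldl \<delta> 0 w = q"
    proof (cases "q = 0")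
      case True thus ?thesis by (intro exI[of _ "[]"]) simp
    next
      case False
      hence "foldl \<delta> 1 (replicate (q - 1) a) = q" using rot_pow[where m=m and \<delta>=\<delta> and a=a and q=1 and k="q - 1", OF rot] q m by (simp add: Q_def)
      moreover have "\<delta> 0 c = 1" using ab by (simp add: \<delta>_def)
      ultimately have "foldl \<delta> 0 (c # replicate (q - 1) a) = q" by simp
      thus ?thesis by blast
    qed
  qed
  have dist: "\<forall>p\<in>Q. \<forall>q\<in>Q. p \<noteq> q \<longrightarrow> (\<exists>w. (foldl \<delta> p w \<in> F) \<noteq> (foldl \<delta> q w \<in> F))"
  proof (intro ballI impI)
    fix p q assume pq: "p \<in> Q" "q \<in> Q" "p \<noteq> q"
    show "\<exists>w. (foldl \<delta> p w \<in> F) \<noteq> (foldl \<delta> q w \<in> F)"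
    proof (cases "p = 0 \<or> q = 0")
      case True
      thus ?thesis using pq by (intro exI[of _ "[]"]) (auto simp: F_def Q_def)
    next
      case False
      hence "foldl \<delta> p (hitw m a b p) = 0" "foldl \<delta> q (hitw m a b p) = q"
        using hit pq by (auto simp: Q_def)
      thus ?thesis using False pq by (intro exI[of _ "hitw m a b p"]) (auto simp: F_def Q_def)
    qed
  qed
  have dk: "regular_lang L \<and> kappa L = card Q \<and>
     kappa (lrev L) = card (range (\<lambda>u. {q\<in>Q. foldl \<delta> q u \<in> F}))"
    by (rule dfa_kappa) (use cl reach dist m in \<open>auto simp: Q_def F_def L_def\<close>)
  have sim: "\<And>p w. foldl \<delta> p w \<in> F \<Longrightarrow> foldl \<delta> 0 w \<in> F"
  proof -
    fix p w
    let ?R = "\<lambda>p p'. p' = 0 \<or> p = p'"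
    have st: "\<And>p p' x. ?R p p' \<Longrightarrow> ?R (\<delta> p x) (\<delta> p' x)" by (auto simp: \<delta>_def)
    have ac: "\<And>p p'. ?R p p' \<Longrightarrow> p \<in> F \<Longrightarrow> p' \<in> F" by (auto simp: F_def)
    show "foldl \<delta> p w \<in> F \<Longrightarrow> foldl \<delta> 0 w \<in> F" using sim_lang[of ?R \<delta> F p 0 w, OF st ac] by simp
  qed
  have sc: "suffix_closed L"
    unfolding suffix_closed_def
  proof (intro ballI allI impI)
    fix w v assume w: "w \<in> L" and "suffix v w"
    then obtain s where s: "w = s @ v" by (auto simp: suffix_def)
    have "foldl \<delta> (foldl \<delta> 0 s) v \<in> F" using w s by (simp add: L_def)
    thus "v \<in> L" using sim by (simp add: L_def)
  qed
  let ?T = "\<lambda>u. {q\<in>Q. foldl \<delta> q u \<in> F}"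
  have fT: "finite (range ?T)" by (rule range_T_finite) (simp add: Q_def)
  have step: "\<And>u r. 1 \<le> r \<Longrightarrow> r \<le> m \<Longrightarrow> 0 \<in> ?T u \<Longrightarrow> ?T (hitw m a b r @ u) = insert r (?T u)"
  proof -
    fix u r assume r: "1 \<le> r" "r \<le> m" and z: "0 \<in> ?T u"
    show "?T (hitw m a b r @ u) = insert r (?T u)"
    proof (rule set_eqI)
      fix q
      show "q \<in> ?T (hitw m a b r @ u) \<longleftrightarrow> q \<in> insert r (?T u)"
      proof (cases "q = 0")
        case True thus ?thesis using hit0 z r by auto
      next
        case False
        thus ?thesis using hit[OF r, of q] z r by (auto simp: Q_def)
      qed
    qed
  qed
  have gen: "\<And>R. finite R \<Longrightarrow> R \<subseteq> {1..m} \<Longrightarrow> \<exists>u. ?T u = insert 0 R"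
  proof -
    fix R :: "nat set" assume "finite R" "R \<subseteq> {1..m}"
    thus "\<exists>u. ?T u = insert 0 R"
    proof (induction R rule: finite_induct)
      case empty
      have "?T [] = {0}" by (auto simp: Q_def F_def)
      thus ?case by (intro exI[of _ "[]"]) simp
    next
      case (insert r R)
      then obtain u where u: "?T u = insert 0 R" by auto
      have "?T (hitw m a b r @ u) = insert 0 (insert r R)" using step[where u=u and r=r] u insert.prems by auto
      thus ?case by blast
    qed
  qed
  have emp: "?T [c] = {}" using ab by (auto simp: \<delta>_def F_def)
  have "insert {} (insert 0 ` Pow {1..m}) \<subseteq> range ?T"
  proof
    fix S assume "S \<in> insert {} (insert 0 ` Pow {1..m})"
    thus "S \<in> range ?T"
    proof
      assume "S = {}" hence "S = ?T [c]" using emp by simp thus ?thesis by (rule image_eqI[OF _ UNIV_I])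
    next
      assume "S \<in> insert 0 ` Pow {1..m}"
      then obtain R where R: "R \<subseteq> {1..m}" "S = insert 0 R" by auto
      have "finite R" using R(1) finite_subset by blast
      then obtain u where "?T u = insert 0 R" using gen R by blast
      hence "S = ?T u" using R by simp
      thus ?thesis by (rule image_eqI[OF _ UNIV_I])
    qed
  qed
  hence "card (insert {} (insert 0 ` Pow {1..m})) \<le> card (range ?T)"
    by (rule card_mono[OF fT])
  hence "kappa (lrev L) \<ge> 2 ^ m + 1" using dk card_insert0_Pow[of m] by simp
  moreover have "kappa L = m + 1" using dk by (simp add: Q_def)
  ultimately show ?thesis using dk sc by blast
qed



lemma wit_factor:
  fixes a b c :: "'a::finite"
  assumes ab: "a \<noteq> b" "a \<noteq> c" "b \<noteq> c" and m: "m \<ge> 1"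
  shows "\<exists>L :: 'a list set. regular_lang L \<and> factor_closed L \<and> kappa L = m + 2 \<and> kappa (lrev L) \<ge> 2 ^ m + 1"
proof -
  define d where "d = Suc m"
  define \<delta> :: "nat \<Rightarrow> 'a \<Rightarrow> nat" where
    "\<delta> q x = (if q = 0 then (if x = a \<or> x = b then 0 else 1)
      else if q \<le> m then (if x = a then Suc (q mod m) else if x = b then (if q = 1 then d else q) else 1)
      else d)" for q x
  define Q where "Q = {..d}"
  define F where "F = {..m}"
  define L where "L = {w. foldl \<delta> 0 w \<in> F}"
  have rot: "\<And>q. 1 \<le> q \<Longrightarrow> q \<le> m \<Longrightarrow> \<delta> q a = Suc (q mod m)" by (simp add: \<delta>_def)
  have b1: "\<delta> 1 b = d" using ab m by (simp add: \<delta>_def)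
  have bq: "\<And>q. 2 \<le> q \<Longrightarrow> q \<le> m \<Longrightarrow> \<delta> q b = q" using ab by (simp add: \<delta>_def)
  have sd: "\<And>w. foldl \<delta> d w = d" by (rule foldl_sink) (simp add: \<delta>_def d_def)
  have s0: "\<And>k. foldl \<delta> 0 (replicate k a) = 0"
  proof -
    fix k show "foldl \<delta> 0 (replicate k a) = 0" by (induction k) (simp_all add: \<delta>_def)
  qed
  have hit: "\<And>r q. 1 \<le> r \<Longrightarrow> r \<le> m \<Longrightarrow> 1 \<le> q \<Longrightarrow> q \<le> m \<Longrightarrow>
      foldl \<delta> q (hitw m a b r) = (if q = r then d else q)"
    using rot_hit[where m=m and \<delta>=\<delta> and a=a and b=b, OF rot b1 bq] sd by blast
  have hit0: "\<And>r. foldl \<delta> 0 (hitw m a b r) = 0"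
    using s0 ab by (simp add: hitw_def \<delta>_def)
  have cl: "\<forall>q\<in>Q. \<forall>x. \<delta> q x \<in> Q"
    using m by (auto simp: \<delta>_def Q_def d_def Suc_leI)
  have c01: "\<delta> 0 c = 1" using ab by (simp add: \<delta>_def)
  have reach: "\<forall>q\<in>Q. \<exists>w. foldl \<delta> 0 w = q"
  proof
    fix q assume q: "q \<in> Q"
    show "\<exists>w. foldl \<delta> 0 w = q"
    proof (cases "q = 0")
      case True thus ?thesis by (intro exI[of _ "[]"]) simp
    next
      case False
      show ?thesis
      proof (cases "q = d")
        case True
        have "foldl \<delta> 0 [c, b] = d" using c01 b1 by simp
        thus ?thesis using True by blast
      next
        case False
        hence "q \<le> m" using q by (simp add: Q_def d_def)
        hence "foldl \<delta> 1 (replicate (q - 1) a) = q" using rot_pow[where m=m and \<delta>=\<delta> and a=a and q=1 and k="q - 1", OF rot] \<open>q \<noteq> 0\<close> m by simp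
        hence "foldl \<delta> 0 (c # replicate (q - 1) a) = q" using c01 by simp
        thus ?thesis by blast
      qed
    qed
  qed
  have dist: "\<forall>p\<in>Q. \<forall>q\<in>Q. p \<noteq> q \<longrightarrow> (\<exists>w. (foldl \<delta> p w \<in> F) \<noteq> (foldl \<delta> q w \<in> F))"
  proof -
    have one: "\<exists>w. (foldl \<delta> p w \<in> F) \<noteq> (foldl \<delta> q w \<in> F)"
      if pq: "p \<in> Q" "q \<in> Q" "p \<noteq> q" "1 \<le> p" "p \<le> m" "q \<noteq> d" for p q
    proof -
      have "foldl \<delta> p (hitw m a b p) = d" using hit pq by auto
      moreover have "foldl \<delta> q (hitw m a b p) \<in> F"
      proof (cases "q = 0")
        case True thus ?thesis using hit0 by (simp add: F_def)
      next
        case False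
        have "q \<le> m" using pq by (auto simp: Q_def d_def)
        thus ?thesis using hit[of p q] pq \<open>q \<noteq> 0\<close> by (simp add: F_def)
      qed
      ultimately show ?thesis by (intro exI[of _ "hitw m a b p"]) (simp add: F_def d_def)
    qed
    show ?thesis
    proof (intro ballI impI)
      fix p q assume pq: "p \<in> Q" "q \<in> Q" "p \<noteq> q"
      show "\<exists>w. (foldl \<delta> p w \<in> F) \<noteq> (foldl \<delta> q w \<in> F)"
      proof (cases "p = d \<or> q = d")
        case True
        thus ?thesis using pq by (intro exI[of _ "[]"]) (auto simp: F_def Q_def d_def)
      next
        case False
        show ?thesis
        proof (cases "p = 0")
          case True
          hence "1 \<le> q" "q \<le> m" using pq False by (auto simp: Q_def d_def)
          thus ?thesis using one[of q p] pq False by metis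
        next
          case f2: False
          hence "1 \<le> p" "p \<le> m" using pq False by (auto simp: Q_def d_def)
          thus ?thesis using one[of p q] pq False by metis
        qed
      qed
    qed
  qed
  have dk: "regular_lang L \<and> kappa L = card Q \<and>
     kappa (lrev L) = card (range (\<lambda>u. {q\<in>Q. foldl \<delta> q u \<in> F}))"
    by (rule dfa_kappa) (use cl reach dist m in \<open>auto simp: Q_def F_def L_def d_def\<close>)
  have pc: "prefix_closed L"
    unfolding prefix_closed_def
  proof (intro ballI allI impI)
    fix w v assume w: "w \<in> L" and "prefix v w"
    then obtain s where s: "w = v @ s" by (auto simp: prefix_def)
    have "foldl \<delta> 0 v \<in> Q" using foldl_Q[OF _ cl] by (simp add: Q_def)
    moreover have "foldl \<delta> (foldl \<delta> 0 v) s \<in> F" using w s by (simp add: L_def)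
    ultimately show "v \<in> L" using sd by (cases "foldl \<delta> 0 v = d") (auto simp: L_def F_def Q_def d_def)
  qed
  have sim: "\<And>p w. foldl \<delta> p w \<in> F \<Longrightarrow> foldl \<delta> 0 w \<in> F"
  proof -
    fix p w
    let ?R = "\<lambda>p p'. p' = 0 \<or> p = p' \<or> p = d"
    have st: "\<And>p p' x. ?R p p' \<Longrightarrow> ?R (\<delta> p x) (\<delta> p' x)" by (auto simp: \<delta>_def d_def)
    have ac: "\<And>p p'. ?R p p' \<Longrightarrow> p \<in> F \<Longrightarrow> p' \<in> F" by (auto simp: F_def d_def)
    show "foldl \<delta> p w \<in> F \<Longrightarrow> foldl \<delta> 0 w \<in> F" using sim_lang[of ?R \<delta> F p 0 w, OF st ac] by simp
  qed
  have sc: "suffix_closed L"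
    unfolding suffix_closed_def
  proof (intro ballI allI impI)
    fix w v assume w: "w \<in> L" and "suffix v w"
    then obtain s where s: "w = s @ v" by (auto simp: suffix_def)
    have "foldl \<delta> (foldl \<delta> 0 s) v \<in> F" using w s by (simp add: L_def)
    thus "v \<in> L" using sim by (simp add: L_def)
  qed
  let ?T = "\<lambda>u. {q\<in>Q. foldl \<delta> q u \<in> F}"
  have fT: "finite (range ?T)" by (rule range_T_finite) (simp add: Q_def)
  have step: "\<And>u r. 1 \<le> r \<Longrightarrow> r \<le> m \<Longrightarrow> ?T (hitw m a b r @ u) = ?T u - {r}"
  proof -
    fix u r assume r: "1 \<le> r" "r \<le> m"
    show "?T (hitw m a b r @ u) = ?T u - {r}"
    proof (rule set_eqI)
      fix q
      show "q \<in> ?T (hitw m a b r @ u) \<longleftrightarrow> q \<in> ?T u - {r}"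
      proof (cases "q = 0")
        case True thus ?thesis using hit0 r by auto
      next
        case False
        show ?thesis
        proof (cases "q = d")
          case True thus ?thesis using sd by (simp add: F_def d_def)
        next
          case f2: False
          thus ?thesis using hit[OF r, of q] sd False r by (cases "q = r") (auto simp: Q_def F_def d_def)
        qed
      qed
    qed
  qed
  have gen: "\<And>R. finite R \<Longrightarrow> R \<subseteq> {1..m} \<Longrightarrow> \<exists>u. ?T u = insert 0 ({1..m} - R)"
  proof -
    fix R :: "nat set" assume "finite R" "R \<subseteq> {1..m}"
    thus "\<exists>u. ?T u = insert 0 ({1..m} - R)"
    proof (induction R rule: finite_induct)
      case empty
      have "?T [] = insert 0 {1..m}" by (auto simp: Q_def F_def d_def)
      thus ?case by (intro exI[of _ "[]"]) simp
    next
      case (insert r R)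
      then obtain u where u: "?T u = insert 0 ({1..m} - R)" by auto
      have "?T (hitw m a b r @ u) = insert 0 ({1..m} - insert r R)" using step[where u=u and r=r] u insert.prems by auto
      thus ?case by blast
    qed
  qed
  have emp: "?T [c, b] = {}"
  proof -
    have "\<And>q. q \<in> Q \<Longrightarrow> foldl \<delta> q [c, b] = d" using ab m by (auto simp: \<delta>_def Q_def d_def)
    thus ?thesis by (auto simp: F_def d_def)
  qed
  have "insert {} (insert 0 ` Pow {1..m}) \<subseteq> range ?T"
  proof
    fix S assume "S \<in> insert {} (insert 0 ` Pow {1..m})"
    thus "S \<in> range ?T"
    proof
      assume "S = {}" hence "S = ?T [c, b]" using emp by simp thus ?thesis by (rule image_eqI[OF _ UNIV_I])
    next
      assume "S \<in> insert 0 ` Pow {1..m}"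
      then obtain R where R: "R \<subseteq> {1..m}" "S = insert 0 R" by auto
      hence "S = insert 0 ({1..m} - ({1..m} - R))" by auto
      have "finite ({1..m} - R)" "{1..m} - R \<subseteq> {1..m}" by auto
      then obtain u where "?T u = insert 0 ({1..m} - ({1..m} - R))" using gen by blast
      hence "S = ?T u" using \<open>S = insert 0 ({1..m} - ({1..m} - R))\<close> by simp
      thus ?thesis by (rule image_eqI[OF _ UNIV_I])
    qed
  qed
  hence "card (insert {} (insert 0 ` Pow {1..m})) \<le> card (range ?T)"
    by (rule card_mono[OF fT])
  hence "kappa (lrev L) \<ge> 2 ^ m + 1" using dk card_insert0_Pow[of m] by simp
  moreover have "kappa L = m + 2" using dk by (simp add: Q_def d_def)
  ultimately show ?thesis using dk pc sc prefix_suffix_factor by blast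
qed



lemma wit_subword:
  fixes lab :: "'a::finite \<Rightarrow> nat"
  assumes surj: "\<And>k. k < 2 * m \<Longrightarrow> \<exists>x. lab x = k"
  shows "\<exists>L :: 'a list set. regular_lang L \<and> subword_closed L \<and> kappa L = m + 2 \<and> kappa (lrev L) \<ge> 2 ^ m + 1"
proof -
  define d where "d = Suc m"
  define \<delta> :: "nat \<Rightarrow> 'a \<Rightarrow> nat" where
    "\<delta> q x = (if q = 0 then (if lab x < m then Suc (lab x) else if lab x < 2 * m then 0 else d)
      else if q \<le> m then (if m \<le> lab x \<and> lab x < 2 * m \<and> lab x - m + 1 \<noteq> q then q else d)
      else d)" for q x
  define Q where "Q = {..d}"
  define F where "F = {..m}"
  define L where "L = {w. foldl \<delta> 0 w \<in> F}"
  define bl where "bl i = (SOME x. lab x = m + i - 1)" for i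
  have bl: "\<And>i. 1 \<le> i \<Longrightarrow> i \<le> m \<Longrightarrow> lab (bl i) = m + i - 1"
  proof -
    fix i assume "1 \<le> i" "i \<le> m"
    hence "\<exists>x. lab x = m + i - 1" using surj by simp
    thus "lab (bl i) = m + i - 1" unfolding bl_def by (rule someI_ex)
  qed
  have blr: "\<And>i. 1 \<le> i \<Longrightarrow> i \<le> m \<Longrightarrow> m \<le> lab (bl i) \<and> lab (bl i) < 2 * m \<and> lab (bl i) - m + 1 = i"
  proof -
    fix i assume i: "1 \<le> i" "i \<le> m"
    hence "lab (bl i) = m + i - 1" by (rule bl)
    thus "m \<le> lab (bl i) \<and> lab (bl i) < 2 * m \<and> lab (bl i) - m + 1 = i" using i by arith
  qed
  have bl0: "\<And>i. 1 \<le> i \<Longrightarrow> i \<le> m \<Longrightarrow> \<delta> 0 (bl i) = 0"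
  proof -
    fix i assume i: "1 \<le> i" "i \<le> m"
    from blr[OF i] show "\<delta> 0 (bl i) = 0" by (simp add: \<delta>_def)
  qed
  have blq: "\<And>i q. 1 \<le> i \<Longrightarrow> i \<le> m \<Longrightarrow> 1 \<le> q \<Longrightarrow> q \<le> m \<Longrightarrow> \<delta> q (bl i) = (if q = i then d else q)"
  proof -
    fix i q assume i: "1 \<le> i" "i \<le> m" and q: "1 \<le> q" "q \<le> m"
    from blr[OF i] q show "\<delta> q (bl i) = (if q = i then d else q)" by (auto simp: \<delta>_def)
  qed
  have sd: "\<And>w. foldl \<delta> d w = d" by (rule foldl_sink) (simp add: \<delta>_def d_def)
  obtain x0 where x0: "m = 0 \<or> lab x0 = 0" using surj[of 0] by (cases "m = 0") auto
  have kill: "\<And>q. q \<in> Q \<Longrightarrow> foldl \<delta> q [x0, x0] = d" using x0 by (auto simp: \<delta>_def Q_def d_def)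
  have cl: "\<forall>q\<in>Q. \<forall>x. \<delta> q x \<in> Q"
    by (auto simp: \<delta>_def Q_def d_def)
  have reach: "\<forall>q\<in>Q. \<exists>w. foldl \<delta> 0 w = q"
  proof
    fix q assume q: "q \<in> Q"
    show "\<exists>w. foldl \<delta> 0 w = q"
    proof (cases "q = 0")
      case True thus ?thesis by (intro exI[of _ "[]"]) simp
    next
      case False
      show ?thesis
      proof (cases "q = d")
        case True
        have "foldl \<delta> 0 [x0, x0] = d" using kill[of 0] by (simp add: Q_def)
        thus ?thesis using True by blast
      next
        case f2: False
        hence "q \<le> m" using q by (simp add: Q_def d_def)
        hence "q - 1 < 2 * m" using False by arith
        then obtain x where "lab x = q - 1" using surj by blast
        hence "foldl \<delta> 0 [x] = q" using False \<open>q \<le> m\<close> by (simp add: \<delta>_def)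
        thus ?thesis by blast
      qed
    qed
  qed
  have dist: "\<forall>p\<in>Q. \<forall>q\<in>Q. p \<noteq> q \<longrightarrow> (\<exists>w. (foldl \<delta> p w \<in> F) \<noteq> (foldl \<delta> q w \<in> F))"
  proof -
    have one: "\<exists>w. (foldl \<delta> p w \<in> F) \<noteq> (foldl \<delta> q w \<in> F)"
      if pq: "p \<in> Q" "q \<in> Q" "p \<noteq> q" "1 \<le> p" "p \<le> m" "q \<noteq> d" for p q
    proof -
      have "foldl \<delta> p [bl p] = d" using blq pq by auto
      moreover have "foldl \<delta> q [bl p] \<in> F"
      proof (cases "q = 0")
        case True thus ?thesis using bl0 pq by (simp add: F_def)
      next
        case False
        have "q \<le> m" using pq by (auto simp: Q_def d_def)
        thus ?thesis using blq[of p q] pq \<open>q \<noteq> 0\<close> by (simp add: F_def)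
      qed
      ultimately show ?thesis by (intro exI[of _ "[bl p]"]) (simp add: F_def d_def)
    qed
    show ?thesis
    proof (intro ballI impI)
      fix p q assume pq: "p \<in> Q" "q \<in> Q" "p \<noteq> q"
      show "\<exists>w. (foldl \<delta> p w \<in> F) \<noteq> (foldl \<delta> q w \<in> F)"
      proof (cases "p = d \<or> q = d")
        case True
        thus ?thesis using pq by (intro exI[of _ "[]"]) (auto simp: F_def Q_def d_def)
      next
        case False
        show ?thesis
        proof (cases "p = 0")
          case True
          hence "1 \<le> q" "q \<le> m" using pq False by (auto simp: Q_def d_def)
          thus ?thesis using one[of q p] pq False by metis
        next
          case f2: False
          hence "1 \<le> p" "p \<le> m" using pq False by (auto simp: Q_def d_def)
          thus ?thesis using one[of p q] pq False by metis
        qed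
      qed
    qed
  qed
  have dk: "regular_lang L \<and> kappa L = card Q \<and>
     kappa (lrev L) = card (range (\<lambda>u. {q\<in>Q. foldl \<delta> q u \<in> F}))"
    by (rule dfa_kappa) (use cl reach dist in \<open>auto simp: Q_def F_def L_def d_def\<close>)
  let ?R = "\<lambda>p p'. p = p' \<or> p = d \<or> p' = 0"
  have st: "\<And>p p' x. ?R p p' \<Longrightarrow> ?R (\<delta> p x) (\<delta> p' x)" by (auto simp: \<delta>_def d_def)
  have ac: "\<And>p p'. ?R p p' \<Longrightarrow> p \<in> F \<Longrightarrow> p' \<in> F" by (auto simp: F_def d_def)
  have dec: "\<And>q x. ?R (\<delta> q x) q" by (auto simp: \<delta>_def d_def)
  have key: "foldl \<delta> q v \<in> F" if "subseq v w" "foldl \<delta> q w \<in> F" for v w q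
    using st ac dec that by (rule sim_subseq)
  have sc: "subword_closed L"
    unfolding subword_closed_def L_def using key by blast
  let ?T = "\<lambda>u. {q\<in>Q. foldl \<delta> q u \<in> F}"
  have fT: "finite (range ?T)" by (rule range_T_finite) (simp add: Q_def)
  have step: "\<And>u r. 1 \<le> r \<Longrightarrow> r \<le> m \<Longrightarrow> ?T (bl r # u) = ?T u - {r}"
  proof -
    fix u r assume r: "1 \<le> r" "r \<le> m"
    show "?T (bl r # u) = ?T u - {r}"
    proof (rule set_eqI)
      fix q
      show "q \<in> ?T (bl r # u) \<longleftrightarrow> q \<in> ?T u - {r}"
      proof (cases "q = 0")
        case True thus ?thesis using bl0 r by auto
      next
        case False
        show ?thesis
        proof (cases "q = d")
          case True
          have dd: "\<And>x. \<delta> d x = d" by (simp add: \<delta>_def d_def)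
          have "foldl \<delta> q (bl r # u) = d" "foldl \<delta> q u = d" using True sd dd by simp_all
          moreover have "d \<notin> F" by (simp add: F_def d_def)
          ultimately show ?thesis by simp
        next
          case f2: False
          thus ?thesis using blq[OF r, of q] sd False r by (cases "q = r") (auto simp: Q_def F_def d_def)
        qed
      qed
    qed
  qed
  have gen: "\<And>R. finite R \<Longrightarrow> R \<subseteq> {1..m} \<Longrightarrow> \<exists>u. ?T u = insert 0 ({1..m} - R)"
  proof -
    fix R :: "nat set" assume "finite R" "R \<subseteq> {1..m}"
    thus "\<exists>u. ?T u = insert 0 ({1..m} - R)"
    proof (induction R rule: finite_induct)
      case empty
      have "?T [] = insert 0 {1..m}" by (auto simp: Q_def F_def d_def)
      thus ?case by (intro exI[of _ "[]"]) simp
    next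
      case (insert r R)
      then obtain u where u: "?T u = insert 0 ({1..m} - R)" by auto
      have "?T (bl r # u) = insert 0 ({1..m} - insert r R)" using step[where u=u and r=r] u insert.prems by auto
      thus ?case by blast
    qed
  qed
  have emp: "?T [x0, x0] = {}"
    using kill by (auto simp: F_def d_def)
  have "insert {} (insert 0 ` Pow {1..m}) \<subseteq> range ?T"
  proof
    fix S assume "S \<in> insert {} (insert 0 ` Pow {1..m})"
    thus "S \<in> range ?T"
    proof
      assume "S = {}" hence "S = ?T [x0, x0]" using emp by simp thus ?thesis by (rule image_eqI[OF _ UNIV_I])
    next
      assume "S \<in> insert 0 ` Pow {1..m}"
      then obtain R where R: "R \<subseteq> {1..m}" "S = insert 0 R" by auto
      hence "S = insert 0 ({1..m} - ({1..m} - R))" by auto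
      have "finite ({1..m} - R)" "{1..m} - R \<subseteq> {1..m}" by auto
      then obtain u where "?T u = insert 0 ({1..m} - ({1..m} - R))" using gen by blast
      hence "S = ?T u" using \<open>S = insert 0 ({1..m} - ({1..m} - R))\<close> by simp
      thus ?thesis by (rule image_eqI[OF _ UNIV_I])
    qed
  qed
  hence "card (insert {} (insert 0 ` Pow {1..m})) \<le> card (range ?T)"
    by (rule card_mono[OF fT])
  hence "kappa (lrev L) \<ge> 2 ^ m + 1" using dk card_insert0_Pow[of m] by simp
  moreover have "kappa L = m + 2" using dk by (simp add: Q_def d_def)
  ultimately show ?thesis using dk sc by blast
qed



lemma letters: "\<exists>h :: nat \<Rightarrow> 'a::finite. inj_on h {..<CARD('a)}"
proof -
  obtain h :: "nat \<Rightarrow> 'a" where "bij_betw h {0..<CARD('a)} UNIV"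
    using ex_bij_betw_nat_finite[of "UNIV :: 'a set"] by auto
  hence "inj_on h {..<CARD('a)}" by (simp add: bij_betw_def atLeast0LessThan)
  thus ?thesis by blast
qed

theorem theorem5:
  shows
  "(\<forall>L :: ('a::finite) list set. regular_lang L \<and> kappa L = 1 \<and>
      (prefix_closed L \<or> suffix_closed L \<or> factor_closed L \<or> subword_closed L)
      \<longrightarrow> kappa (lrev L) = 1)
 \<and> (\<forall>(L :: 'a list set) n. regular_lang L \<and> kappa L = n \<and> n \<ge> 2 \<and> prefix_closed L
      \<longrightarrow> kappa (lrev L) \<le> 2 ^ (n - 1))
 \<and> (CARD('a) \<ge> 2 \<longrightarrow> (\<forall>n\<ge>2. \<exists>L :: 'a list set. regular_lang L \<and> prefix_closed L \<and>
      kappa L = n \<and> kappa (lrev L) = 2 ^ (n - 1)))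
 \<and> (\<forall>(L :: 'a list set) n. regular_lang L \<and> kappa L = n \<and> n \<ge> 2 \<and> suffix_closed L
      \<longrightarrow> kappa (lrev L) \<le> 2 ^ (n - 1) + 1)
 \<and> (CARD('a) \<ge> 3 \<longrightarrow> (\<forall>n\<ge>2. \<exists>L :: 'a list set. regular_lang L \<and> suffix_closed L \<and>
      kappa L = n \<and> kappa (lrev L) = 2 ^ (n - 1) + 1))
 \<and> (\<forall>(L :: 'a list set) n. regular_lang L \<and> kappa L = n \<and> n \<ge> 2 \<and> factor_closed L
      \<longrightarrow> kappa (lrev L) \<le> 2 ^ (n - 2) + 1)
 \<and> (CARD('a) \<ge> 3 \<longrightarrow> (\<forall>n\<ge>2. \<exists>L :: 'a list set. regular_lang L \<and> factor_closed L \<and>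
      kappa L = n \<and> kappa (lrev L) = 2 ^ (n - 2) + 1))
 \<and> (\<forall>(L :: 'a list set) n. regular_lang L \<and> kappa L = n \<and> n \<ge> 2 \<and> subword_closed L
      \<longrightarrow> kappa (lrev L) \<le> 2 ^ (n - 2) + 1)
 \<and> (\<forall>n\<ge>2. CARD('a) \<ge> 2 * n \<longrightarrow> (\<exists>L :: 'a list set. regular_lang L \<and> subword_closed L \<and>
      kappa L = n \<and> kappa (lrev L) = 2 ^ (n - 2) + 1))"
proof -
  obtain h :: "nat \<Rightarrow> 'a" where h: "inj_on h {..<CARD('a)}" using letters by blast
  have p1: "\<forall>L :: 'a list set. regular_lang L \<and> kappa L = 1 \<and>
      (prefix_closed L \<or> suffix_closed L \<or> factor_closed L \<or> subword_closed L)
      \<longrightarrow> kappa (lrev L) = 1" using kappa1 by blast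
  have p2: "\<forall>(L :: 'a list set) n. regular_lang L \<and> kappa L = n \<and> n \<ge> 2 \<and> prefix_closed L
      \<longrightarrow> kappa (lrev L) \<le> 2 ^ (n - 1)" using ub_prefix by blast
  have p4: "\<forall>(L :: 'a list set) n. regular_lang L \<and> kappa L = n \<and> n \<ge> 2 \<and> suffix_closed L
      \<longrightarrow> kappa (lrev L) \<le> 2 ^ (n - 1) + 1" using ub_suffix by blast
  have p6: "\<forall>(L :: 'a list set) n. regular_lang L \<and> kappa L = n \<and> n \<ge> 2 \<and> factor_closed L
      \<longrightarrow> kappa (lrev L) \<le> 2 ^ (n - 2) + 1" using ub_factor by blast
  have p8: "\<forall>(L :: 'a list set) n. regular_lang L \<and> kappa L = n \<and> n \<ge> 2 \<and> subword_closed L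
      \<longrightarrow> kappa (lrev L) \<le> 2 ^ (n - 2) + 1" using ub_factor subword_factor by blast
  have p3: "CARD('a) \<ge> 2 \<longrightarrow> (\<forall>n\<ge>2. \<exists>L :: 'a list set. regular_lang L \<and> prefix_closed L \<and>
      kappa L = n \<and> kappa (lrev L) = 2 ^ (n - 1))"
  proof (intro impI allI)
    fix n :: nat assume c: "CARD('a) \<ge> 2" and n: "n \<ge> 2"
    have "h 0 \<noteq> h 1" using h c inj_onD[OF h, of 0 1] by auto
    hence "\<exists>L :: 'a list set. regular_lang L \<and> prefix_closed L \<and> kappa L = n - 1 + 1 \<and> kappa (lrev L) \<ge> 2 ^ (n - 1)"
      by (rule wit_prefix) (use n in simp)
    then obtain L :: "'a list set" where L: "regular_lang L" "prefix_closed L" "kappa L = n - 1 + 1"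
      "kappa (lrev L) \<ge> 2 ^ (n - 1)" by blast
    have "kappa L = n" using L n by simp
    thus "\<exists>L :: 'a list set. regular_lang L \<and> prefix_closed L \<and> kappa L = n \<and> kappa (lrev L) = 2 ^ (n - 1)"
      using L p2 n by (metis le_antisym)
  qed
  have p5: "CARD('a) \<ge> 3 \<longrightarrow> (\<forall>n\<ge>2. \<exists>L :: 'a list set. regular_lang L \<and> suffix_closed L \<and>
      kappa L = n \<and> kappa (lrev L) = 2 ^ (n - 1) + 1)"
  proof (intro impI allI)
    fix n :: nat assume c: "CARD('a) \<ge> 3" and n: "n \<ge> 2"
    have "h 0 \<noteq> h 1" "h 0 \<noteq> h 2" "h 1 \<noteq> h 2" using c inj_onD[OF h] by fastforce+
    hence "\<exists>L :: 'a list set. regular_lang L \<and> suffix_closed L \<and> kappa L = n - 1 + 1 \<and> kappa (lrev L) \<ge> 2 ^ (n - 1) + 1"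
      by (rule wit_suffix) (use n in simp)
    then obtain L :: "'a list set" where L: "regular_lang L" "suffix_closed L" "kappa L = n - 1 + 1"
      "kappa (lrev L) \<ge> 2 ^ (n - 1) + 1" by blast
    have "kappa L = n" using L n by simp
    thus "\<exists>L :: 'a list set. regular_lang L \<and> suffix_closed L \<and> kappa L = n \<and> kappa (lrev L) = 2 ^ (n - 1) + 1"
      using L p4 n by (metis le_antisym)
  qed
  have p7: "CARD('a) \<ge> 3 \<longrightarrow> (\<forall>n\<ge>2. \<exists>L :: 'a list set. regular_lang L \<and> factor_closed L \<and>
      kappa L = n \<and> kappa (lrev L) = 2 ^ (n - 2) + 1)"
  proof (intro impI allI)
    fix n :: nat assume c: "CARD('a) \<ge> 3" and n: "n \<ge> 2"
    obtain L :: "'a list set" where L: "regular_lang L" "factor_closed L" "kappa L = n"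
      "kappa (lrev L) \<ge> 2 ^ (n - 2) + 1"
    proof (cases "n = 2")
      case True
      have "\<exists>L :: 'a list set. regular_lang L \<and> subword_closed L \<and> kappa L = 0 + 2 \<and> kappa (lrev L) \<ge> 2 ^ 0 + 1"
        by (rule wit_subword[of 0 "\<lambda>_::'a. 0::nat"]) simp
      then obtain L :: "'a list set" where "regular_lang L" "subword_closed L" "kappa L = 0 + 2"
        "kappa (lrev L) \<ge> 2 ^ 0 + 1" by blast
      moreover from \<open>subword_closed L\<close> have "factor_closed L" by (rule subword_factor)
      ultimately show ?thesis using that[of L] True by simp
    next
      case False
      have "h 0 \<noteq> h 1" "h 0 \<noteq> h 2" "h 1 \<noteq> h 2" using c inj_onD[OF h] by fastforce+
      hence "\<exists>L :: 'a list set. regular_lang L \<and> factor_closed L \<and> kappa L = n - 2 + 2 \<and> kappa (lrev L) \<ge> 2 ^ (n - 2) + 1"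
        by (rule wit_factor) (use n False in simp)
      then obtain L :: "'a list set" where "regular_lang L" "factor_closed L" "kappa L = n - 2 + 2"
        "kappa (lrev L) \<ge> 2 ^ (n - 2) + 1" by blast
      thus ?thesis using that[of L] n by simp
    qed
    thus "\<exists>L :: 'a list set. regular_lang L \<and> factor_closed L \<and> kappa L = n \<and> kappa (lrev L) = 2 ^ (n - 2) + 1"
      using p6 n by (metis le_antisym)
  qed
  have p9: "\<forall>n\<ge>2. CARD('a) \<ge> 2 * n \<longrightarrow> (\<exists>L :: 'a list set. regular_lang L \<and> subword_closed L \<and>
      kappa L = n \<and> kappa (lrev L) = 2 ^ (n - 2) + 1)"
  proof (intro impI allI)
    fix n :: nat assume n: "n \<ge> 2" and c: "CARD('a) \<ge> 2 * n"
    define lab where "lab = inv_into {..<CARD('a)} h"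
    have "\<And>k. k < 2 * (n - 2) \<Longrightarrow> \<exists>x. lab x = k"
    proof -
      fix k assume "k < 2 * (n - 2)"
      hence "k \<in> {..<CARD('a)}" using c by simp
      hence "lab (h k) = k" using h by (simp add: lab_def inv_into_f_f)
      thus "\<exists>x. lab x = k" by blast
    qed
    hence "\<exists>L :: 'a list set. regular_lang L \<and> subword_closed L \<and> kappa L = n - 2 + 2 \<and> kappa (lrev L) \<ge> 2 ^ (n - 2) + 1"
      by (rule wit_subword)
    then obtain L :: "'a list set" where L: "regular_lang L" "subword_closed L" "kappa L = n - 2 + 2"
      "kappa (lrev L) \<ge> 2 ^ (n - 2) + 1" by blast
    have "kappa L = n" using L n by simp
    thus "\<exists>L :: 'a list set. regular_lang L \<and> subword_closed L \<and> kappa L = n \<and> kappa (lrev L) = 2 ^ (n - 2) + 1"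
      using L p8 n by (metis le_antisym)
  qed
  show ?thesis using p1 p2 p3 p4 p5 p6 p7 p8 p9 by blast
qed


end
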